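(* Let $\ell,k,t$ be positive integers, let $\mathbb{F}$ be a finite field, and let $b$ be an integer with $b>\ell/k$. There is a $t$-private $k$-server linear HSS for $\mathsf{CONCAT}_\ell(\mathbb{F})$ in which every output share lies in $\mathbb{F}^b$ (hence with download rate $\ell/(kb)$) if and only if there is an $\mathbb{F}$-linear code $C\subseteq(\mathbb{F}^b)^k$ with rate at least $\ell/(kb)$ and distance at least $t+1$. Moreover, in the "if" direction, the HSS can be taken to use $t$-private $k$-party CNF sharing as its $\mathsf{Share}$ function and to have upload cost $k\ell\binom{k-1}{t}\log_2|\mathbb{F}|$.
   Context: A $k$-server HSS for a class $\mathcal{F}$ of functions $f:\mathcal{X}^m\to\mathcal{Y}$ is a triple $(\mathsf{Share},\mathsf{Eval},\mathsf{Rec})$: the randomized $\mathsf{Share}$ maps $x\in\mathcal{X}$ to input shares $(x^{(1)},\dots,x^{(k)})$, each of the $m$ inputs being shared independently; server $j$ computes the output share $y^{(j)}=\mathsf{Eval}(f,j,(x_1^{(j)},\dots,x_m^{(j)}))$; and $\mathsf{Rec}(y^{(1)},\dots,y^{(k)})$ must equal $f(x_1,\dots,x_m)$ with probability 1. It is $t$-private if for every $T\subseteq[k]$ with $|T|\le t$ and all $x,x'\in\mathcal{X}$ the distribution of $(x^{(j)})_{j\in T}$ is the same under $\mathsf{Share}(x)$ and $\mathsf{Share}(x')$. For an object $w$ in a finite domain $\mathcal W$, $|w|=\log_2|\mathcal W|$. Upload cost $=\sum_{i,j}|x_i^{(j)}|$; download cost $=\sum_j|y^{(j)}|$; download rate $=\log_2|\mathcal{Y}|/\text{download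 cost}$. The HSS is linear (over $\mathbb{F}$) if $\mathcal{X}=\mathbb{F}$, $\mathsf{Share}(x,\mathbf{r})$ is $\mathbb{F}$-linear in $x$ and a uniformly random vector $\mathbf{r}$ over $\mathbb{F}$, $\mathcal{Y}=\mathbb{F}^{b'}$, each output share lies in some $\mathbb{F}^{b_j}$, and $\mathsf{Rec}$ is $\mathbb{F}$-linear ($\mathsf{Eval}$ need not be linear). $\mathsf{CONCAT}_\ell(\mathcal{X})$ is the class consisting of the single identity function $\mathcal{X}^\ell\to\mathcal{X}^\ell$, with $m=\ell$ inputs each shared independently. The $t$-private $k$-party CNF sharing of $x\in\mathbb{F}$: choose uniformly random $x_T\in\mathbb{F}$ for each $T\subseteq[k]$ with $|T|=t$ subject to $\sum_T x_T=x$; party $j$ gets $(x_T)_{T:j\notin T}$. An $\mathbb{F}$-linear code $C\subseteq(\mathbb{F}^b)^k$ is an $\mathbb{F}$-subspace; rate $\dim_{\mathbb{F}}C/(bk)$; distance $\min_{c\ne c'\in C}|\{i: c_i\ne c'_i\}|$. *)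

theory Defs
  imports "HOL-Library.Function_Algebras" "HOL-Probability.Probability_Mass_Function"
begin

text \<open>Vectors in F^n are modelled as functions nat => F that vanish at indices >= n.\<close>
definition vecs :: "nat \<Rightarrow> (nat \<Rightarrow> 'f::zero) set" where
  "vecs n = {r. \<forall>q\<ge>n. r q = 0}"

text \<open>A linear sharing scheme for k parties: randomness r in F^nr; party j's input
  share is a vector in F^(a j), with coordinates sh j x r p for p < a j.\<close>
definition linear_share ::
  "nat \<Rightarrow> nat \<Rightarrow> (nat \<Rightarrow> nat) \<Rightarrow> (nat \<Rightarrow> 'f::field \<Rightarrow> (nat \<Rightarrow> 'f) \<Rightarrow> nat \<Rightarrow> 'f) \<Rightarrow> bool" where
  "linear_share k nr a sh \<longleftrightarrow>
     (\<forall>j<k. \<forall>p<a j. \<forall>c x x' r r'. r \<in> vecs nr \<longrightarrow> r' \<in> vecs nr \<longrightarrow>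
        sh j (c * x + x') (\<lambda>q. c * r q + r' q) p = c * sh j x r p + sh j x' r' p)"

definition share_view ::
  "(nat \<Rightarrow> nat) \<Rightarrow> (nat \<Rightarrow> 'f::zero \<Rightarrow> (nat \<Rightarrow> 'f) \<Rightarrow> nat \<Rightarrow> 'f) \<Rightarrow> nat \<Rightarrow> 'f \<Rightarrow> (nat \<Rightarrow> 'f) \<Rightarrow> nat \<Rightarrow> 'f" where
  "share_view a sh j x r = (\<lambda>p. if p < a j then sh j x r p else 0)"

definition t_private ::
  "nat \<Rightarrow> nat \<Rightarrow> nat \<Rightarrow> (nat \<Rightarrow> nat) \<Rightarrow> (nat \<Rightarrow> 'f::{field,finite} \<Rightarrow> (nat \<Rightarrow> 'f) \<Rightarrow> nat \<Rightarrow> 'f) \<Rightarrow> bool" where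
  "t_private k t nr a sh \<longleftrightarrow>
     (\<forall>T. T \<subseteq> {..<k} \<longrightarrow> card T \<le> t \<longrightarrow> (\<forall>x x'.
        map_pmf (\<lambda>r. \<lambda>j. if j \<in> T then share_view a sh j x r else (\<lambda>_. 0)) (pmf_of_set (vecs nr)) =
        map_pmf (\<lambda>r. \<lambda>j. if j \<in> T then share_view a sh j x' r else (\<lambda>_. 0)) (pmf_of_set (vecs nr))))"

text \<open>Correctness for CONCAT_l: each of the l inputs x i is shared independently with
  randomness rs i; server j applies Eval (ev j) to its l input shares, obtaining an output
  share in F^b; the linear reconstruction with coefficients R (a linear map (F^b)^k -> F^l)
  returns (x 0, ..., x (l-1)) for every choice of inputs and randomness.\<close>
definition hss_concat_correct ::
  "nat \<Rightarrow> nat \<Rightarrow> nat \<Rightarrow> nat \<Rightarrow> (nat \<Rightarrow> nat) \<Rightarrow> (nat \<Rightarrow> 'f::field \<Rightarrow> (nat \<Rightarrow> 'f) \<Rightarrow> nat \<Rightarrow> 'f)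
   \<Rightarrow> (nat \<Rightarrow> (nat \<Rightarrow> nat \<Rightarrow> 'f) \<Rightarrow> nat \<Rightarrow> 'f) \<Rightarrow> (nat \<Rightarrow> nat \<Rightarrow> nat \<Rightarrow> 'f) \<Rightarrow> bool" where
  "hss_concat_correct l k b nr a sh ev R \<longleftrightarrow>
     (\<forall>x :: nat \<Rightarrow> 'f. \<forall>rs. (\<forall>i<l. rs i \<in> vecs nr) \<longrightarrow>
       (let inp = (\<lambda>j. \<lambda>i. if i < l then share_view a sh j (x i) (rs i) else (\<lambda>_. 0));
            y = (\<lambda>j. \<lambda>c. if c < b then ev j (inp j) c else 0)
        in \<forall>i<l. (\<Sum>j<k. \<Sum>c<b. R i j c * y j c) = x i))"

definition linear_HSS_concat ::
  "nat \<Rightarrow> nat \<Rightarrow> nat \<Rightarrow> nat \<Rightarrow> nat \<Rightarrow> (nat \<Rightarrow> nat) \<Rightarrow> (nat \<Rightarrow> 'f::{field,finite} \<Rightarrow> (nat \<Rightarrow> 'f) \<Rightarrow> nat \<Rightarrow> 'f)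
   \<Rightarrow> (nat \<Rightarrow> (nat \<Rightarrow> nat \<Rightarrow> 'f) \<Rightarrow> nat \<Rightarrow> 'f) \<Rightarrow> (nat \<Rightarrow> nat \<Rightarrow> nat \<Rightarrow> 'f) \<Rightarrow> bool" where
  "linear_HSS_concat l k t b nr a sh ev R \<longleftrightarrow>
     linear_share k nr a sh \<and> t_private k t nr a sh \<and> hss_concat_correct l k b nr a sh ev R"

definition upload_cost :: "'f::finite itself \<Rightarrow> nat \<Rightarrow> nat \<Rightarrow> (nat \<Rightarrow> nat) \<Rightarrow> real" where
  "upload_cost _ l k a = (\<Sum>i<l. \<Sum>j<k. log 2 (real (CARD('f) ^ a j)))"

text \<open>t-private k-party CNF sharing, w.r.t. an enumeration e of the N t-subsets of [k]:
  x_{e q} = r q for q < N-1 and x_{e (N-1)} = x - sum of the others (so the x_T are uniform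
  subject to summing to x); party j receives (x_T)_{j notin T}, listed in the order of e.\<close>
definition cnf_idx :: "nat \<Rightarrow> (nat \<Rightarrow> nat set) \<Rightarrow> nat \<Rightarrow> nat list" where
  "cnf_idx N e j = filter (\<lambda>q. j \<notin> e q) [0..<N]"

definition cnf_share :: "nat \<Rightarrow> (nat \<Rightarrow> nat set) \<Rightarrow> nat \<Rightarrow> 'f::field \<Rightarrow> (nat \<Rightarrow> 'f) \<Rightarrow> nat \<Rightarrow> 'f" where
  "cnf_share N e j x r p =
     (let xT = (\<lambda>q. if q < N - 1 then r q else x - (\<Sum>q'<N - 1. r q'))
      in if p < length (cnf_idx N e j) then xT (cnf_idx N e j ! p) else 0)"

text \<open>Codewords of (F^b)^k: functions c with c j p the p-th coordinate of block j.\<close>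
definition code_space :: "nat \<Rightarrow> nat \<Rightarrow> (nat \<Rightarrow> nat \<Rightarrow> 'f::zero) set" where
  "code_space k b = {c. \<forall>j p. (k \<le> j \<or> b \<le> p) \<longrightarrow> c j p = 0}"

definition fscale :: "'f::field \<Rightarrow> (nat \<Rightarrow> nat \<Rightarrow> 'f) \<Rightarrow> (nat \<Rightarrow> nat \<Rightarrow> 'f)" where
  "fscale c v = (\<lambda>j p. c * v j p)"

definition linear_code :: "nat \<Rightarrow> nat \<Rightarrow> (nat \<Rightarrow> nat \<Rightarrow> 'f::field) set \<Rightarrow> bool" where
  "linear_code k b C \<longleftrightarrow> C \<subseteq> code_space k b \<and> 0 \<in> C \<and>
     (\<forall>u\<in>C. \<forall>v\<in>C. u + v \<in> C) \<and> (\<forall>c. \<forall>u\<in>C. fscale c u \<in> C)"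

definition code_dim :: "(nat \<Rightarrow> nat \<Rightarrow> 'f::field) set \<Rightarrow> nat" where
  "code_dim C = vector_space.dim fscale C"

definition code_rate :: "nat \<Rightarrow> nat \<Rightarrow> (nat \<Rightarrow> nat \<Rightarrow> 'f::field) set \<Rightarrow> real" where
  "code_rate k b C = real (code_dim C) / real (b * k)"

definition code_dist_ge :: "nat \<Rightarrow> (nat \<Rightarrow> nat \<Rightarrow> 'f) set \<Rightarrow> nat \<Rightarrow> bool" where
  "code_dist_ge k C d \<longleftrightarrow>
     (\<forall>c\<in>C. \<forall>c'\<in>C. c \<noteq> c' \<longrightarrow> d \<le> card {j. j < k \<and> c j \<noteq> c' j})"

end

theory Submission
  imports Defs
begin


lemma fsum_apply: "(sum f I) x = sum (\<lambda>i. f i x) I"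
  by (induction I rule: infinite_finite_induct) auto

lemma solve_lemma:
  fixes A :: "nat \<Rightarrow> 'p \<Rightarrow> 'f::field"
  assumes "finite P"
  shows "(\<forall>z. (\<forall>p\<in>P. (\<Sum>i<l. z i * A i p) = 0) \<longrightarrow> (\<forall>i<l. z i = 0))
         \<Longrightarrow> \<exists>y. \<forall>i<l. (\<Sum>p\<in>P. A i p * y p) = v i"
proof (induction l arbitrary: A v)
  case 0
  then show ?case by auto
next
  case (Suc l)
  have ex: "\<exists>p0\<in>P. A l p0 \<noteq> 0"
  proof (rule ccontr)
    assume "\<not> ?thesis"
    then have "\<forall>p\<in>P. (\<Sum>i<Suc l. (\<lambda>i. if i = l then (1::'f) else 0) i * A i p) = 0"
      by simp
    then show False using spec[OF Suc.prems, of "\<lambda>i. if i = l then (1::'f) else 0"] by auto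
  qed
  then obtain p0 where p0: "p0 \<in> P" "A l p0 \<noteq> 0" by blast
  define d where "d i = A i p0 / A l p0" for i
  define A' where "A' i p = A i p - d i * A l p" for i p
  have hyp: "\<forall>z. (\<forall>p\<in>P. (\<Sum>i<l. z i * A' i p) = 0) \<longrightarrow> (\<forall>i<l. z i = 0)"
  proof (rule allI, rule impI)
    fix z assume z: "\<forall>p\<in>P. (\<Sum>i<l. z i * A' i p) = 0"
    define z' where "z' i = (if i < l then z i else - (\<Sum>i<l. z i * d i))" for i
    have "\<forall>p\<in>P. (\<Sum>i<Suc l. z' i * A i p) = 0"
    proof
      fix p assume "p \<in> P"
      have "(\<Sum>i<Suc l. z' i * A i p) = (\<Sum>i<l. z i * A i p) - (\<Sum>i<l. z i * d i) * A l p"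
        by (simp add: z'_def)
      also have "\<dots> = (\<Sum>i<l. z i * A' i p)"
        by (simp add: A'_def algebra_simps sum_subtractf sum_distrib_right sum_distrib_left)
      finally show "(\<Sum>i<Suc l. z' i * A i p) = 0" using z \<open>p \<in> P\<close> by simp
    qed
    then have "\<forall>i<Suc l. z' i = 0" using spec[OF Suc.prems, of z'] by blast
    then show "\<forall>i<l. z i = 0" unfolding z'_def by (metis less_SucI)
  qed
  obtain y where y: "\<forall>i<l. (\<Sum>p\<in>P. A' i p * y p) = v i - d i * v l"
    using Suc.IH[of A' "\<lambda>i. v i - d i * v l"] hyp by blast
  define S where "S = (\<Sum>p\<in>P. A l p * y p)"
  define \<delta> where "\<delta> = (v l - S) / A l p0"
  define y' where "y' p = y p + (if p = p0 then \<delta> else 0)" for p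
  have row: "(\<Sum>p\<in>P. A i p * y' p) = (\<Sum>p\<in>P. A i p * y p) + A i p0 * \<delta>" for i
  proof -
    have "(\<Sum>p\<in>P. A i p * y' p) = (\<Sum>p\<in>P. A i p * y p + A i p * (if p = p0 then \<delta> else 0))"
      unfolding y'_def by (simp only: distrib_left)
    also have "\<dots> = (\<Sum>p\<in>P. A i p * y p) + (\<Sum>p\<in>P. A i p * (if p = p0 then \<delta> else 0))"
      by (rule sum.distrib)
    also have "(\<Sum>p\<in>P. A i p * (if p = p0 then \<delta> else 0)) = A i p0 * \<delta>"
      using p0 assms by (simp add: if_distrib sum.delta cong: if_cong)
    finally show ?thesis .
  qed
  show ?case
  proof (intro exI allI impI)
    fix i assume i: "i < Suc l"
    show "(\<Sum>p\<in>P. A i p * y' p) = v i"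
    proof (cases "i = l")
      case True
      then show ?thesis using p0 by (simp add: row S_def[symmetric] \<delta>_def)
    next
      case False
      with i have il: "i < l" by simp
      have "(\<Sum>p\<in>P. A i p * y p) = (\<Sum>p\<in>P. A' i p * y p + d i * (A l p * y p))"
        by (rule sum.cong) (simp_all add: A'_def algebra_simps)
      also have "\<dots> = (\<Sum>p\<in>P. A' i p * y p) + d i * S"
        by (simp add: S_def sum.distrib sum_distrib_left)
      also have "\<dots> = v i - d i * v l + d i * S" using y il by simp
      finally have e: "(\<Sum>p\<in>P. A i p * y p) = v i - d i * v l + d i * S" .
      have "A i p0 * \<delta> = d i * (v l - S)" using p0 by (simp add: d_def \<delta>_def)
      then show ?thesis unfolding row e by (simp add: algebra_simps)
    qed
  qed
qed



interpretation fs: vector_space "fscale :: 'f::field \<Rightarrow> (nat \<Rightarrow> nat \<Rightarrow> 'f) \<Rightarrow> _"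
  by unfold_locales (auto simp: fscale_def algebra_simps fun_eq_iff)

lemma fscale_apply[simp]: "fscale c v j p = c * v j p"
  by (simp add: fscale_def)

lemma code_dim_fs: "code_dim C = fs.dim C"
  by (simp add: code_dim_def)

lemma vecs_zero[simp]: "(\<lambda>_. 0) \<in> vecs n"
  by (simp add: vecs_def)

lemma finite_vecs: "finite (vecs n :: (nat \<Rightarrow> 'f::{zero,finite}) set)"
proof (induction n)
  case 0
  have "vecs 0 = {(\<lambda>_. 0) :: nat \<Rightarrow> 'f}" by (auto simp: vecs_def)
  then show ?case by simp
next
  case (Suc n)
  have "vecs (Suc n) \<subseteq> (\<lambda>(c, f). f(n := c)) ` (UNIV \<times> (vecs n :: (nat \<Rightarrow> 'f) set))"
  proof
    fix r :: "nat \<Rightarrow> 'f" assume r: "r \<in> vecs (Suc n)"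
    have "r(n := 0) \<in> vecs n" using r by (auto simp: vecs_def)
    moreover have "r = (r(n := 0))(n := r n)" by simp
    ultimately show "r \<in> (\<lambda>(c, f). f(n := c)) ` (UNIV \<times> vecs n)"
      by (intro image_eqI[where x="(r n, r(n:=0))"]) auto
  qed
  moreover have "finite ((\<lambda>(c, f). f(n := c)) ` (UNIV \<times> (vecs n :: (nat \<Rightarrow> 'f) set)))"
    using Suc by simp
  ultimately show ?case by (rule finite_subset)
qed

lemma hss_key:
  fixes sh :: "nat \<Rightarrow> 'f::{field,finite} \<Rightarrow> (nat \<Rightarrow> 'f) \<Rightarrow> nat \<Rightarrow> 'f"
  assumes priv: "t_private k t nr a sh"
    and corr: "hss_concat_correct l k b nr a sh ev R"
    and T: "T \<subseteq> {..<k}" "card T \<le> t"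
    and z: "\<forall>j<k. j \<notin> T \<longrightarrow> (\<forall>c<b. (\<Sum>i<l. z i * R i j c) = 0)"
    and i0: "i0 < l"
  shows "z i0 = 0"
proof (rule ccontr)
  assume nz: "z i0 \<noteq> 0"
  define V where "V = (vecs nr :: (nat \<Rightarrow> 'f) set)"
  have V: "finite V" "V \<noteq> {}" "(\<lambda>_. 0) \<in> V" using finite_vecs[where 'f='f] vecs_zero[of nr] unfolding V_def by blast+
  define view where "view x r = (\<lambda>j. if j \<in> T then share_view a sh j x r else (\<lambda>_. 0))" for x r
  have eq: "map_pmf (view 0) (pmf_of_set V) = map_pmf (view 1) (pmf_of_set V)"
    using priv T unfolding t_private_def view_def V_def by blast
  have "view 0 (\<lambda>_. 0) \<in> set_pmf (map_pmf (view 0) (pmf_of_set V))"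
    using V by simp
  then have "view 0 (\<lambda>_. 0) \<in> view 1 ` V" using eq V by simp
  then obtain r' where r': "r' \<in> V" "view 1 r' = view 0 (\<lambda>_. 0)" by auto
  define inp where "inp x rs j = (\<lambda>i. if i < l then share_view a sh j (x i) (rs i) else (\<lambda>_. 0))"
    for x :: "nat \<Rightarrow> 'f" and rs :: "nat \<Rightarrow> nat \<Rightarrow> 'f" and j
  define Y where "Y x rs j c = (if c < b then ev j (inp x rs j) c else 0)" for x rs j c
  have corr': "\<forall>i<l. (\<Sum>j<k. \<Sum>c<b. R i j c * Y x rs j c) = x i"
    if "\<forall>i<l. rs i \<in> vecs nr" for x rs
    using corr that unfolding hss_concat_correct_def Let_def Y_def inp_def by blast
  define x0 where "x0 = (\<lambda>_::nat. 0 :: 'f)"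
  define rs0 where "rs0 = (\<lambda>_::nat. (\<lambda>_::nat. 0 :: 'f))"
  define x1 where "x1 = (\<lambda>i::nat. if i = i0 then 1 else 0 :: 'f)"
  define rs1 where "rs1 = (\<lambda>i::nat. if i = i0 then r' else (\<lambda>_::nat. 0 :: 'f))"
  have c0: "\<forall>i<l. (\<Sum>j<k. \<Sum>c<b. R i j c * Y x0 rs0 j c) = x0 i"
    by (rule corr') (simp add: rs0_def)
  have c1: "\<forall>i<l. (\<Sum>j<k. \<Sum>c<b. R i j c * Y x1 rs1 j c) = x1 i"
    by (rule corr') (use r' in \<open>simp add: rs1_def V_def\<close>)
  have inpeq: "inp x0 rs0 j = inp x1 rs1 j" if "j \<in> T" for j
  proof -
    have "share_view a sh j 1 r' = share_view a sh j 0 (\<lambda>_. 0)"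
      using fun_cong[OF r'(2), of j] that by (simp add: view_def)
    then show ?thesis
      by (auto simp: inp_def x0_def rs0_def x1_def rs1_def fun_eq_iff)
  qed
  define G where "G Y = (\<Sum>j<k. \<Sum>c<b. (\<Sum>i<l. z i * R i j c) * Y j c)" for Y :: "nat \<Rightarrow> nat \<Rightarrow> 'f"
  have Gx: "G (Y x rs) = (\<Sum>i<l. z i * x i)"
    if "\<forall>i<l. (\<Sum>j<k. \<Sum>c<b. R i j c * Y x rs j c) = x i" for x rs
  proof -
    have "(\<Sum>i<l. z i * x i) = (\<Sum>i<l. z i * (\<Sum>j<k. \<Sum>c<b. R i j c * Y x rs j c))"
      using that by simp
    also have "\<dots> = (\<Sum>i<l. \<Sum>j<k. \<Sum>c<b. z i * R i j c * Y x rs j c)"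
      by (simp add: sum_distrib_left mult.assoc)
    also have "\<dots> = (\<Sum>j<k. \<Sum>c<b. \<Sum>i<l. z i * R i j c * Y x rs j c)"
      by (subst sum.swap) (simp add: sum.swap[of _ "{..<l}"])
    also have "\<dots> = G (Y x rs)"
      by (simp add: G_def sum_distrib_right)
    finally show ?thesis by simp
  qed
  have "G (Y x0 rs0) = G (Y x1 rs1)"
    unfolding G_def
  proof (intro sum.cong refl)
    fix j c assume j: "j \<in> {..<k}" and c: "c \<in> {..<b}"
    show "(\<Sum>i<l. z i * R i j c) * Y x0 rs0 j c = (\<Sum>i<l. z i * R i j c) * Y x1 rs1 j c"
    proof (cases "j \<in> T")
      case True
      then show ?thesis by (simp add: Y_def inpeq)
    next
      case False
      then show ?thesis using z j c by simp
    qed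
  qed
  then have "(\<Sum>i<l. z i * x0 i) = (\<Sum>i<l. z i * x1 i)"
    using Gx[OF c0] Gx[OF c1] by simp
  moreover have "(\<Sum>i<l. z i * x1 i) = z i0"
    using i0 by (simp add: x1_def if_distrib sum.delta cong: if_cong)
  ultimately show False using nz by (simp add: x0_def)
qed



lemma sum_delta_mult: "i < (l::nat) \<Longrightarrow> (\<Sum>m<l. (if m = i then 1 else 0) * f m) = (f i :: 'a::semiring_1)"
proof -
  assume "i < l"
  have "(\<Sum>m<l. (if m = i then 1 else 0) * f m) = (\<Sum>m<l. if m = i then f m else 0)"
    by (rule sum.cong) auto
  also have "\<dots> = f i" using \<open>i < l\<close> by (subst sum.delta) auto
  finally show ?thesis .
qed

lemma hss_to_code:
  fixes sh :: "nat \<Rightarrow> 'f::{field,finite} \<Rightarrow> (nat \<Rightarrow> 'f) \<Rightarrow> nat \<Rightarrow> 'f"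
  assumes H: "linear_HSS_concat l k t b nr a sh ev R"
  shows "\<exists>C :: (nat \<Rightarrow> nat \<Rightarrow> 'f) set. linear_code k b C \<and>
                  code_rate k b C \<ge> real l / real (k * b) \<and> code_dist_ge k C (t + 1)"
proof -
  have priv: "t_private k t nr a sh" and corr: "hss_concat_correct l k b nr a sh ev R"
    using H by (auto simp: linear_HSS_concat_def)
  note key = hss_key[OF priv corr]
  define \<psi> where "\<psi> z = (\<lambda>j c. if j < k \<and> c < b then (\<Sum>i<l. z i * R i j c) else 0)"
    for z :: "nat \<Rightarrow> 'f"
  define w where "w i = \<psi> (\<lambda>m. if m = i then 1 else 0)" for i
  have w_apply: "w i j c = (if j < k \<and> c < b then R i j c else 0)" if "i < l" for i j c
    using that by (simp add: w_def \<psi>_def sum_delta_mult)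
  define C where "C = fs.span (w ` {..<l})"
  have sub: "fs.subspace (range \<psi>)"
    unfolding fs.subspace_def
  proof (intro conjI ballI allI)
    show "0 \<in> range \<psi>"
      by (rule image_eqI[where x="\<lambda>_. 0"]) (auto simp: \<psi>_def fun_eq_iff)
  next
    fix x y assume "x \<in> range \<psi>" "y \<in> range \<psi>"
    then obtain zx zy where "x = \<psi> zx" "y = \<psi> zy" by auto
    then show "x + y \<in> range \<psi>"
      by (intro image_eqI[where x="\<lambda>i. zx i + zy i"])
         (auto simp: \<psi>_def fun_eq_iff algebra_simps sum.distrib)
  next
    fix c :: 'f and x assume "x \<in> range \<psi>"
    then obtain zx where "x = \<psi> zx" by auto
    then show "fscale c x \<in> range \<psi>"
      by (intro image_eqI[where x="\<lambda>i. c * zx i"])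
         (auto simp: \<psi>_def fun_eq_iff algebra_simps sum_distrib_left)
  qed
  have Crange: "C \<subseteq> range \<psi>"
    unfolding C_def by (rule fs.span_minimal[OF _ sub]) (auto simp: w_def)
  have lin: "linear_code k b C"
    unfolding linear_code_def
  proof (intro conjI ballI allI)
    show "C \<subseteq> code_space k b"
      using Crange by (auto simp: code_space_def \<psi>_def)
    show "0 \<in> C" unfolding C_def by (rule fs.span_zero)
    show "u + v \<in> C" if "u \<in> C" "v \<in> C" for u v
      using that unfolding C_def by (rule fs.span_add)
    show "fscale c u \<in> C" if "u \<in> C" for c u
      using that unfolding C_def by (rule fs.span_scale)
  qed
  have zeq: "\<forall>i<l. z i = z' i"
    if "\<forall>j<k. j \<notin> T \<longrightarrow> (\<forall>c<b. (\<Sum>i<l. z i * R i j c) = (\<Sum>i<l. z' i * R i j c))"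
       "T \<subseteq> {..<k}" "card T \<le> t" for z z' :: "nat \<Rightarrow> 'f" and T
  proof (intro allI impI)
    fix i assume i: "i < l"
    have "(\<lambda>m. z m - z' m) i = 0"
    proof (rule key[OF that(2,3) _ i])
      show "\<forall>j<k. j \<notin> T \<longrightarrow> (\<forall>c<b. (\<Sum>i<l. (z i - z' i) * R i j c) = 0)"
        using that(1) by (simp add: algebra_simps sum_subtractf)
    qed
    then show "z i = z' i" by simp
  qed
  have dist: "code_dist_ge k C (t + 1)"
    unfolding code_dist_ge_def
  proof (intro ballI impI)
    fix c c' assume cC: "c \<in> C" "c' \<in> C" and ne: "c \<noteq> c'"
    obtain z z' where cz: "c = \<psi> z" "c' = \<psi> z'" using cC Crange by blast
    define T where "T = {j. j < k \<and> c j \<noteq> c' j}"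
    show "t + 1 \<le> card T"
    proof (rule ccontr)
      assume "\<not> t + 1 \<le> card T"
      then have cT: "card T \<le> t" by simp
      have "\<forall>j<k. j \<notin> T \<longrightarrow> (\<forall>cc<b. (\<Sum>i<l. z i * R i j cc) = (\<Sum>i<l. z' i * R i j cc))"
      proof (intro allI impI)
        fix j cc assume j: "j < k" and nT: "j \<notin> T" and cc: "cc < b"
        from nT j have "c j = c' j" by (simp add: T_def)
        then have "c j cc = c' j cc" by simp
        then show "(\<Sum>i<l. z i * R i j cc) = (\<Sum>i<l. z' i * R i j cc)"
          using j cc by (simp add: cz \<psi>_def)
      qed
      from zeq[OF this _ cT] have "\<forall>i<l. z i = z' i" by (auto simp: T_def)
      then have "\<psi> z = \<psi> z'" by (simp add: \<psi>_def fun_eq_iff)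
      then show False using ne cz by simp
    qed
  qed
  have winj: "inj_on w {..<l}"
  proof (rule inj_onI)
    fix i i' assume i: "i \<in> {..<l}" and i': "i' \<in> {..<l}" and e: "w i = w i'"
    show "i = i'"
    proof (rule ccontr)
      assume ne: "i \<noteq> i'"
      define z where "z m = (if m = i then 1 else 0 :: 'f)" for m
      define z' where "z' m = (if m = i' then 1 else 0 :: 'f)" for m
      have "\<forall>j<k. j \<notin> {} \<longrightarrow> (\<forall>c<b. (\<Sum>m<l. z m * R m j c) = (\<Sum>m<l. z' m * R m j c))"
      proof (intro allI impI)
        fix j c assume j: "j < k" and "j \<notin> {}" and c: "c < b"
        have "w i j c = w i' j c" using e by simp
        then have "R i j c = R i' j c" using i i' j c by (simp add: w_apply)
        then show "(\<Sum>m<l. z m * R m j c) = (\<Sum>m<l. z' m * R m j c)"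
          using i i' by (simp add: z_def z'_def sum_delta_mult)
      qed
      from zeq[OF this] i have "z i = z' i" by auto
      then show False using ne by (simp add: z_def z'_def)
    qed
  qed
  have indep: "fs.independent (w ` {..<l})"
  proof (rule fs.independent_if_scalars_zero)
    show "finite (w ` {..<l})" by simp
  next
    fix f x assume sum0: "(\<Sum>x\<in>w ` {..<l}. fscale (f x) x) = 0" and x: "x \<in> w ` {..<l}"
    then obtain i0 where i0: "i0 < l" "x = w i0" by auto
    define z where "z i = f (w i)" for i
    have s: "(\<Sum>i<l. fscale (z i) (w i)) = 0"
      using sum0 by (simp add: sum.reindex[OF winj] z_def)
    have "\<forall>j<k. j \<notin> {} \<longrightarrow> (\<forall>c<b. (\<Sum>i<l. z i * R i j c) = (\<Sum>i<l. (\<lambda>_. 0) i * R i j c))"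
    proof (intro allI impI)
      fix j c assume j: "j < k" and "j \<notin> {}" and c: "c < b"
      have "0 = (\<Sum>i<l. fscale (z i) (w i)) j c" using s by simp
      also have "\<dots> = (\<Sum>i<l. z i * w i j c)" by (simp add: fsum_apply)
      also have "\<dots> = (\<Sum>i<l. z i * R i j c)"
        by (rule sum.cong) (use j c in \<open>auto simp: w_apply\<close>)
      finally show "(\<Sum>i<l. z i * R i j c) = (\<Sum>i<l. (\<lambda>_. 0) i * R i j c)" by simp
    qed
    from zeq[OF this] i0 have "z i0 = 0" by auto
    then show "f x = 0" by (simp add: z_def i0)
  qed
  have dimC: "code_dim C = l"
    unfolding code_dim_fs C_def
    using fs.dim_span_eq_card_independent[OF indep] card_image[OF winj] by simp
  have rate: "code_rate k b C \<ge> real l / real (k * b)"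
    by (simp add: code_rate_def dimC mult.commute)
  show ?thesis using lin rate dist by blast
qed



lemma set_cnf_idx: "set (cnf_idx N e j) = {q. q < N \<and> j \<notin> e q}"
  by (auto simp: cnf_idx_def)

lemma distinct_cnf_idx: "distinct (cnf_idx N e j)"
  by (simp add: cnf_idx_def)

lemma cnf_linear: "linear_share k (N - 1) a (cnf_share N e :: nat \<Rightarrow> 'f::field \<Rightarrow> _)"
  unfolding linear_share_def
proof (intro allI impI)
  fix j p c x x' and r r' :: "nat \<Rightarrow> 'f"
  show "cnf_share N e j (c * x + x') (\<lambda>q. c * r q + r' q) p =
        c * cnf_share N e j x r p + cnf_share N e j x' r' p"
    by (simp add: cnf_share_def Let_def sum.distrib sum_distrib_left algebra_simps)
qed

lemma cnf_private:
  fixes a :: "nat \<Rightarrow> nat"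
  assumes e: "bij_betw e {0..<N} {T. T \<subseteq> {..<k} \<and> card T = t}" and tk: "t < k"
  shows "t_private k t (N - 1) a (cnf_share N e :: nat \<Rightarrow> 'f::{field,finite} \<Rightarrow> _)"
  unfolding t_private_def
proof (intro allI impI)
  fix T x x' assume T: "T \<subseteq> {..<k}" "card T \<le> t"
  obtain E where E: "E \<subseteq> {..<k} - T" "card E = t - card T" "finite E"
  proof (rule obtain_subset_with_card_n)
    have "card ({..<k} - T) = k - card T"
      using T by (simp add: card_Diff_subset finite_subset)
    then show "t - card T \<le> card ({..<k} - T)" using tk by simp
  qed
  define T0 where "T0 = T \<union> E"
  have fT: "finite T" using T finite_subset by blast
  have "card T0 = t" unfolding T0_def
    using E fT T by (subst card_Un_disjoint) auto
  moreover have "T0 \<subseteq> {..<k}" using E T by (auto simp: T0_def)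
  ultimately have "T0 \<in> e ` {0..<N}" using e by (auto simp: bij_betw_def)
  then obtain q0 where q0: "q0 < N" "e q0 = T0" by auto
  have TT0: "T \<subseteq> e q0" using q0 by (auto simp: T0_def)
  define V where "V = (vecs (N - 1) :: (nat \<Rightarrow> 'f) set)"
  have V: "finite V" "V \<noteq> {}" using finite_vecs[where 'f='f] vecs_zero[of "N - 1"] unfolding V_def by blast+
  define view where "view y r = (\<lambda>j. if j \<in> T then share_view a (cnf_share N e) j y r else (\<lambda>_. 0))"
    for y :: 'f and r
  define \<pi> where "\<pi> r = (\<lambda>q. r q + (if q = q0 then x - x' else 0))" for r :: "nat \<Rightarrow> 'f"
  have viewgen: "view y r1 = view y' r"
    if xT: "\<And>q. q < N \<Longrightarrow> q \<noteq> q0 \<Longrightarrow>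
       (if q < N - 1 then r1 q else y - (\<Sum>q'<N - 1. r1 q')) =
       (if q < N - 1 then r q else y' - (\<Sum>q'<N - 1. r q'))" for r r1 y y'
  proof -
    have "share_view a (cnf_share N e) j y r1 = share_view a (cnf_share N e) j y' r" if j: "j \<in> T" for j
    proof -
      have "cnf_share N e j y r1 p = cnf_share N e j y' r p" for p
      proof (cases "p < length (cnf_idx N e j)")
        case True
        then have "cnf_idx N e j ! p \<in> {q. q < N \<and> j \<notin> e q}"
          using nth_mem set_cnf_idx by metis
        then have "cnf_idx N e j ! p < N" "cnf_idx N e j ! p \<noteq> q0" using j TT0 by auto
        then show ?thesis using True xT by (simp add: cnf_share_def Let_def)
      next
        case False
        then show ?thesis by (simp add: cnf_share_def Let_def)
      qed
      then show ?thesis by (simp add: share_view_def fun_eq_iff)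
    qed
    then show ?thesis by (simp add: view_def fun_eq_iff)
  qed
  show "map_pmf (view x) (pmf_of_set V) = map_pmf (view x') (pmf_of_set V)"
  proof (cases "q0 < N - 1")
    case False
    then have q0N: "q0 = N - 1" using q0 by simp
    have "view x r = view x' r" for r
      by (rule viewgen) (use q0N in auto)
    then have "view x = view x'" by (rule ext)
    then show ?thesis by simp
  next
    case True
    have sum\<pi>: "(\<Sum>q'<N - 1. \<pi> r q') = (\<Sum>q'<N - 1. r q') + (x - x')" for r
      using True by (simp add: \<pi>_def sum.distrib)
    have vx: "view x (\<pi> r) = view x' r" for r
      by (rule viewgen) (simp only: sum\<pi>; auto simp: \<pi>_def)
    have inj: "inj_on \<pi> V" by (rule inj_onI) (auto simp: \<pi>_def fun_eq_iff)
    have img: "\<pi> ` V = V"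
    proof
      show "\<pi> ` V \<subseteq> V" using True by (auto simp: \<pi>_def V_def vecs_def)
      show "V \<subseteq> \<pi> ` V"
      proof
        fix r assume r: "r \<in> V"
        define r' where "r' = (\<lambda>q. r q - (if q = q0 then x - x' else 0))"
        have "r' \<in> V" using r True by (auto simp: r'_def V_def vecs_def)
        moreover have "r = \<pi> r'" by (simp add: r'_def \<pi>_def)
        ultimately show "r \<in> \<pi> ` V" by blast
      qed
    qed
    have "map_pmf \<pi> (pmf_of_set V) = pmf_of_set V"
      using map_pmf_of_set_inj[OF inj V(2) V(1)] img by simp
    then have "map_pmf (view x) (pmf_of_set V) = map_pmf (view x) (map_pmf \<pi> (pmf_of_set V))" by simp
    also have "\<dots> = map_pmf (\<lambda>r. view x (\<pi> r)) (pmf_of_set V)" by (simp add: map_pmf_comp)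
    also have "\<dots> = map_pmf (view x') (pmf_of_set V)" by (simp add: vx)
    finally show ?thesis .
  qed
qed



lemma sum_nth_distinct:
  assumes "distinct xs"
  shows "(\<Sum>p<length xs. f (xs ! p)) = (\<Sum>q\<in>set xs. (f q :: 'a::comm_monoid_add))"
proof -
  have "(\<Sum>p<length xs. f (xs ! p)) = sum_list (map f xs)"
    by (simp add: sum_list_sum_nth atLeast0LessThan)
  also have "\<dots> = (\<Sum>q\<in>set xs. f q)" using assms by (simp add: sum_list_distinct_conv_sum_set)
  finally show ?thesis .
qed

lemma cnf_correct:
  fixes R :: "nat \<Rightarrow> nat \<Rightarrow> nat \<Rightarrow> 'f::field" and sol :: "nat \<Rightarrow> (nat \<Rightarrow> 'f) \<Rightarrow> nat \<Rightarrow> nat \<Rightarrow> 'f"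
  assumes sol: "\<And>q v. q < N \<Longrightarrow> \<forall>i<l. (\<Sum>j<k. \<Sum>c<b. R i j c * (if j \<notin> e q then sol q v j c else 0)) = v i"
    and N: "0 < N"
    and a: "\<forall>j<k. a j = length (cnf_idx N e j)"
  shows "hss_concat_correct l k b (N - 1) a (cnf_share N e)
           (\<lambda>j inp c. \<Sum>p<length (cnf_idx N e j). sol (cnf_idx N e j ! p) (\<lambda>i. if i < l then inp i p else 0) j c) R"
  unfolding hss_concat_correct_def Let_def
proof (intro allI impI)
  fix x :: "nat \<Rightarrow> 'f" and rs :: "nat \<Rightarrow> nat \<Rightarrow> 'f" and i
  assume i: "i < l"
  define xT where "xT i q = (if q < N - 1 then rs i q else x i - (\<Sum>q'<N - 1. rs i q'))" for i q
  define W where "W q = (\<lambda>i. if i < l then xT i q else 0)" for q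
  define F where "F j c q = sol q (W q) j c" for j c q
  define inp where "inp j = (\<lambda>i. if i < l then share_view a (cnf_share N e) j (x i) (rs i) else (\<lambda>_. 0))" for j
  have Yj: "(\<Sum>p<length (cnf_idx N e j). sol (cnf_idx N e j ! p) (\<lambda>i. if i < l then inp j i p else 0) j c)
            = (\<Sum>q<N. if j \<notin> e q then F j c q else 0)" if j: "j < k" for j c
  proof -
    have "(\<Sum>p<length (cnf_idx N e j). sol (cnf_idx N e j ! p) (\<lambda>i. if i < l then inp j i p else 0) j c)
        = (\<Sum>p<length (cnf_idx N e j). F j c (cnf_idx N e j ! p))"
    proof (rule sum.cong[OF refl])
      fix p assume p: "p \<in> {..<length (cnf_idx N e j)}"
      have "(\<lambda>i. if i < l then inp j i p else 0) = W (cnf_idx N e j ! p)"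
        using p j a by (auto simp: inp_def W_def xT_def share_view_def cnf_share_def Let_def fun_eq_iff)
      then show "sol (cnf_idx N e j ! p) (\<lambda>i. if i < l then inp j i p else 0) j c = F j c (cnf_idx N e j ! p)"
        by (simp add: F_def)
    qed
    also have "\<dots> = (\<Sum>q\<in>set (cnf_idx N e j). F j c q)"
      by (rule sum_nth_distinct[OF distinct_cnf_idx])
    also have "\<dots> = (\<Sum>q\<in>{q \<in> {..<N}. j \<notin> e q}. F j c q)"
      by (rule sum.cong) (auto simp: set_cnf_idx)
    also have "\<dots> = (\<Sum>q<N. if j \<notin> e q then F j c q else 0)"
      by (rule sum.inter_filter) simp
    finally show ?thesis .
  qed
  have "(\<Sum>j<k. \<Sum>c<b. R i j c *
          (if c < b then (\<Sum>p<length (cnf_idx N e j). sol (cnf_idx N e j ! p) (\<lambda>i. if i < l then inp j i p else 0) j c) else 0))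
        = (\<Sum>j<k. \<Sum>c<b. R i j c * (\<Sum>q<N. if j \<notin> e q then F j c q else 0))"
    by (intro sum.cong refl) (simp add: Yj)
  also have "\<dots> = (\<Sum>j<k. \<Sum>c<b. \<Sum>q<N. R i j c * (if j \<notin> e q then F j c q else 0))"
    by (simp add: sum_distrib_left)
  also have "\<dots> = (\<Sum>q<N. \<Sum>j<k. \<Sum>c<b. R i j c * (if j \<notin> e q then F j c q else 0))"
    by (subst sum.swap) (simp add: sum.swap[of _ "{..<N}"])
  also have "\<dots> = (\<Sum>q<N. W q i)"
  proof (rule sum.cong[OF refl])
    fix q assume "q \<in> {..<N}"
    then have "q < N" by simp
    from sol[OF this, of "W q"] i
    show "(\<Sum>j<k. \<Sum>c<b. R i j c * (if j \<notin> e q then F j c q else 0)) = W q i"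
      unfolding F_def by blast
  qed
  also have "\<dots> = (\<Sum>q<N. xT i q)" using i by (simp add: W_def)
  also have "\<dots> = x i"
  proof -
    have "N = Suc (N - 1)" using N by simp
    then have "(\<Sum>q<N. xT i q) = (\<Sum>q<N - 1. xT i q) + xT i (N - 1)"
      by (metis sum.lessThan_Suc)
    also have "(\<Sum>q<N - 1. xT i q) = (\<Sum>q<N - 1. rs i q)" by (simp add: xT_def)
    finally show ?thesis by (simp add: xT_def)
  qed
  finally show "(\<Sum>j<k. \<Sum>c<b. R i j c *
          (if c < b then (\<Sum>p<length (cnf_idx N e j). sol (cnf_idx N e j ! p)
             (\<lambda>ia. if ia < l then (if ia < l then share_view a (cnf_share N e) j (x ia) (rs ia) else (\<lambda>_. 0)) p else 0) j c) else 0)) = x i"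
    by (simp only: inp_def)
qed



lemma cnf_count:
  assumes e: "bij_betw e {0..<N} {T. T \<subseteq> {..<k} \<and> card T = t}" and j: "j < k"
  shows "length (cnf_idx N e j) = (k - 1) choose t"
proof -
  have "length (cnf_idx N e j) = card (set (cnf_idx N e j))"
    by (simp add: distinct_card[OF distinct_cnf_idx])
  also have "\<dots> = card {q. q < N \<and> j \<notin> e q}" by (simp add: set_cnf_idx)
  also have "\<dots> = card (e ` {q. q < N \<and> j \<notin> e q})"
    by (rule card_image[symmetric], rule inj_on_subset[OF bij_betw_imp_inj_on[OF e]]) auto
  also have "e ` {q. q < N \<and> j \<notin> e q} = {T. T \<subseteq> {..<k} - {j} \<and> card T = t}"
  proof
    show "e ` {q. q < N \<and> j \<notin> e q} \<subseteq> {T. T \<subseteq> {..<k} - {j} \<and> card T = t}"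
      using e by (auto simp: bij_betw_def)
    show "{T. T \<subseteq> {..<k} - {j} \<and> card T = t} \<subseteq> e ` {q. q < N \<and> j \<notin> e q}"
    proof
      fix T assume T: "T \<in> {T. T \<subseteq> {..<k} - {j} \<and> card T = t}"
      then have "T \<in> e ` {0..<N}" using e by (auto simp: bij_betw_def)
      then obtain q where "q < N" "T = e q" by auto
      then show "T \<in> e ` {q. q < N \<and> j \<notin> e q}" using T by auto
    qed
  qed
  also have "card {T. T \<subseteq> {..<k} - {j} \<and> card T = t} = card ({..<k} - {j}) choose t"
    by (rule n_subsets) simp
  also have "card ({..<k} - {j}) = k - 1" using j by simp
  finally show ?thesis .
qed

lemma upload_cnf:
  assumes e: "bij_betw e {0..<N} {T. T \<subseteq> {..<k} \<and> card T = t}"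
    and a: "\<forall>j<k. a j = length (cnf_idx N e j)"
  shows "upload_cost TYPE('f::finite) l k a = real k * real l * real ((k - 1) choose t) * log 2 (real CARD('f))"
proof -
  have "upload_cost TYPE('f) l k a = (\<Sum>i<l. \<Sum>j<k. real ((k - 1) choose t) * log 2 (real CARD('f)))"
    unfolding upload_cost_def
  proof (intro sum.cong refl)
    fix j assume "j \<in> {..<k}"
    then have "a j = (k - 1) choose t" using a cnf_count[OF e] by simp
    then show "log 2 (real (CARD('f) ^ a j)) = real ((k - 1) choose t) * log 2 (real CARD('f))"
      by (simp add: log_nat_power)
  qed
  then show ?thesis by simp
qed



lemma div_cancel_aux: "(x::real) / c \<le> y / c \<Longrightarrow> 0 < c \<Longrightarrow> x \<le> y"
  by (simp add: divide_le_cancel)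

lemma code_to_hss:
  fixes C :: "(nat \<Rightarrow> nat \<Rightarrow> 'f::{field,finite}) set"
  assumes lin: "linear_code k b C" and rate: "code_rate k b C \<ge> real l / real (k * b)"
    and dist: "code_dist_ge k C (t + 1)"
    and l: "0 < l" and k: "0 < k" and bl: "real b > real l / real k"
  shows "\<exists>N e a ev (R :: nat \<Rightarrow> nat \<Rightarrow> nat \<Rightarrow> 'f).
                 bij_betw e {0..<N} {T. T \<subseteq> {..<k} \<and> card T = t}
               \<and> (\<forall>j<k. a j = length (cnf_idx N e j))
               \<and> linear_HSS_concat l k t b (N - 1) a (cnf_share N e) ev R
               \<and> upload_cost TYPE('f) l k a
                   = real k * real l * real ((k - 1) choose t) * log 2 (real CARD('f))"
proof -
  have "real l / real k > 0" using l k by simp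
  then have b: "0 < b" using bl by simp
  have dimC: "l \<le> code_dim C"
  proof -
    have pos: "real (b * k) > 0" using b k by simp
    have "real l / real (b * k) \<le> real (code_dim C) / real (b * k)"
      using rate by (simp add: code_rate_def mult.commute)
    then have "real l \<le> real (code_dim C)" using pos by (rule div_cancel_aux)
    then show ?thesis by simp
  qed
  obtain B where B: "B \<subseteq> C" "fs.independent B" "C \<subseteq> fs.span B" "card B = fs.dim C"
    by (rule fs.basis_exists)
  have "l \<le> card B" using B(4) dimC by (simp add: code_dim_fs)
  obtain B' where B': "B' \<subseteq> B" "card B' = l" "finite B'"
    using obtain_subset_with_card_n[OF \<open>l \<le> card B\<close>] by blast
  obtain g where g: "bij_betw g {0..<l} B'" using ex_bij_betw_nat_finite[OF B'(3)] B'(2) by auto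
  have ginj: "inj_on g {0..<l}" and gimg: "g ` {0..<l} = B'" using g by (auto simp: bij_betw_def)
  have indep: "fs.independent B'" using fs.independent_mono[OF B(2) B'(1)] .
  have gC: "g i \<in> C" if "i < l" for i
  proof -
    have "g i \<in> B'" using that gimg[symmetric] by simp
    then show ?thesis using B'(1) B(1) by blast
  qed
  have gcode: "g i j c = 0" if "i < l" "k \<le> j \<or> b \<le> c" for i j c
    using gC[OF that(1)] lin that(2) by (auto simp: linear_code_def code_space_def)
  have spanC: "fs.span C = C"
    using lin unfolding fs.span_eq_iff fs.subspace_def linear_code_def by blast
  have combo: "(\<Sum>i<l. fscale (z i) (g i)) \<in> C" for z
  proof -
    have "(\<Sum>i<l. fscale (z i) (g i)) \<in> fs.span C"
      by (intro fs.span_sum fs.span_scale fs.span_base) (use gC in auto)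
    then show ?thesis using spanC by simp
  qed
  have indep0: "\<forall>i<l. z i = 0" if s: "(\<Sum>i<l. fscale (z i) (g i)) = 0" for z
  proof (intro allI impI)
    fix i assume i: "i < l"
    define u where "u v = z (inv_into {0..<l} g v)" for v
    have "(\<Sum>v\<in>B'. fscale (u v) v) = (\<Sum>i\<in>{0..<l}. fscale (u (g i)) (g i))"
      unfolding gimg[symmetric] by (simp add: sum.reindex[OF ginj])
    also have "\<dots> = (\<Sum>i<l. fscale (z i) (g i))"
      unfolding atLeast0LessThan[symmetric] u_def by (intro sum.cong refl) (simp add: inv_into_f_f[OF ginj])
    finally have "(\<Sum>v\<in>B'. fscale (u v) v) = 0" using s by simp
    from fs.independentD[OF indep B'(3) subset_refl this, of "g i"] i gimg
    have "u (g i) = 0" by auto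
    then show "z i = 0" using i by (simp add: u_def inv_into_f_f[OF ginj])
  qed
  have Gkey: "\<forall>i<l. z i = 0"
    if T: "T \<subseteq> {..<k}" "card T \<le> t"
      and hz: "\<forall>j<k. j \<notin> T \<longrightarrow> (\<forall>c<b. (\<Sum>i<l. z i * g i j c) = 0)" for z T
  proof -
    define u where "u = (\<Sum>i<l. fscale (z i) (g i))"
    have uapp: "u j c = (\<Sum>i<l. z i * g i j c)" for j c
      by (simp add: u_def fsum_apply)
    have "u = 0"
    proof (rule ccontr)
      assume "u \<noteq> 0"
      then have "t + 1 \<le> card {j. j < k \<and> u j \<noteq> (0::nat \<Rightarrow> nat \<Rightarrow> 'f) j}"
        using dist combo[of z] lin unfolding code_dist_ge_def linear_code_def u_def by blast
      moreover have "{j. j < k \<and> u j \<noteq> (0::nat \<Rightarrow> nat \<Rightarrow> 'f) j} \<subseteq> T"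
      proof
        fix j assume "j \<in> {j. j < k \<and> u j \<noteq> (0::nat \<Rightarrow> nat \<Rightarrow> 'f) j}"
        then have j: "j < k" and nz: "u j \<noteq> (\<lambda>_. 0)" by (auto simp: zero_fun_def)
        show "j \<in> T"
        proof (rule ccontr)
          assume "j \<notin> T"
          have "u j c = 0" for c
          proof (cases "c < b")
            case True then show ?thesis using hz j \<open>j \<notin> T\<close> by (simp add: uapp)
          next
            case False then show ?thesis by (simp add: uapp gcode)
          qed
          then show False using nz by auto
        qed
      qed
      then have "card {j. j < k \<and> u j \<noteq> (0::nat \<Rightarrow> nat \<Rightarrow> 'f) j} \<le> card T"
        by (rule card_mono[OF finite_subset[OF T(1)], rotated]) simp
      ultimately show False using T(2) by simp
    qed
    then show ?thesis using indep0 by (simp add: u_def)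
  qed
  have tk: "t < k"
  proof -
    have "\<not> (\<forall>i<l. (\<lambda>m. if m = 0 then 1 else 0 :: 'f) i = 0)" using l by auto
    then have "\<not> (\<forall>j<k. j \<notin> {..<k} \<longrightarrow> True) \<or> \<not> ({..<k} \<subseteq> {..<k} \<and> card {..<k} \<le> t)"
      using Gkey[of "{..<k}" "\<lambda>m. if m = 0 then 1 else 0"] by auto
    then show ?thesis by simp
  qed
  define S where "S = {T. T \<subseteq> {..<k} \<and> card T = t}"
  have finS: "finite S" by (rule finite_subset[of _ "Pow {..<k}"]) (auto simp: S_def)
  define N where "N = card S"
  obtain e where e: "bij_betw e {0..<N} S" using ex_bij_betw_nat_finite[OF finS] by (auto simp: N_def)
  have N: "0 < N"
  proof -
    have "{..<t} \<in> S" using tk by (auto simp: S_def)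
    then show ?thesis using finS by (auto simp: N_def card_gt_0_iff)
  qed
  define R where "R i j c = g i j c" for i j c
  have solex: "\<exists>Y. \<forall>i<l. (\<Sum>j<k. \<Sum>c<b. R i j c * (if j \<notin> e q then Y j c else 0)) = v i"
    if q: "q < N" for q v
  proof -
    have eq: "e q \<in> S" using e q by (auto simp: bij_betw_def)
    define T where "T = e q"
    have T: "T \<subseteq> {..<k}" "card T \<le> t" using eq by (auto simp: S_def T_def)
    define P where "P = ({..<k} - T) \<times> {..<b}"
    define A where "A i p = g i (fst p) (snd p)" for i p
    have hyp: "\<forall>z. (\<forall>p\<in>P. (\<Sum>i<l. z i * A i p) = 0) \<longrightarrow> (\<forall>i<l. z i = 0)"
    proof (rule allI, rule impI)
      fix z assume hz: "\<forall>p\<in>P. (\<Sum>i<l. z i * A i p) = 0"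
      show "\<forall>i<l. z i = 0"
        by (rule Gkey[OF T]) (use hz in \<open>auto simp: P_def A_def\<close>)
    qed
    obtain y where y: "\<forall>i<l. (\<Sum>p\<in>P. A i p * y p) = v i"
      using solve_lemma[where P=P and l=l and A=A and v=v] hyp by (auto simp: P_def)
    define Y where "Y j c = y (j, c)" for j c
    have "(\<Sum>j<k. \<Sum>c<b. R i j c * (if j \<notin> T then Y j c else 0)) = (\<Sum>p\<in>P. A i p * y p)" for i
    proof -
      have "(\<Sum>j<k. \<Sum>c<b. R i j c * (if j \<notin> T then Y j c else 0))
          = (\<Sum>j<k. if j \<notin> T then (\<Sum>c<b. g i j c * y (j, c)) else 0)"
        by (rule sum.cong) (auto simp: R_def Y_def)
      also have "\<dots> = (\<Sum>j\<in>{j \<in> {..<k}. j \<notin> T}. \<Sum>c<b. g i j c * y (j, c))"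
        by (rule sum.inter_filter[symmetric]) simp
      also have "{j \<in> {..<k}. j \<notin> T} = {..<k} - T" by auto
      also have "(\<Sum>j\<in>{..<k} - T. \<Sum>c<b. g i j c * y (j, c)) = (\<Sum>p\<in>P. A i p * y p)"
        unfolding P_def A_def by (subst sum.cartesian_product) (simp add: case_prod_beta)
      finally show ?thesis .
    qed
    then have "\<forall>i<l. (\<Sum>j<k. \<Sum>c<b. R i j c * (if j \<notin> e q then Y j c else 0)) = v i"
      using y unfolding T_def by auto
    then show ?thesis by blast
  qed
  define sol where "sol q v = (SOME Y. \<forall>i<l. (\<Sum>j<k. \<Sum>c<b. R i j c * (if j \<notin> e q then Y j c else 0)) = v i)"
    for q v
  have sol: "\<forall>i<l. (\<Sum>j<k. \<Sum>c<b. R i j c * (if j \<notin> e q then sol q v j c else 0)) = v i"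
    if "q < N" for q v
    unfolding sol_def by (rule someI_ex[OF solex[OF that]])
  define a where "a j = length (cnf_idx N e j)" for j
  have a: "\<forall>j<k. a j = length (cnf_idx N e j)" by (simp add: a_def)
  have e': "bij_betw e {0..<N} {T. T \<subseteq> {..<k} \<and> card T = t}" using e by (simp add: S_def)
  have H: "linear_HSS_concat l k t b (N - 1) a (cnf_share N e)
           (\<lambda>j inp c. \<Sum>p<length (cnf_idx N e j). sol (cnf_idx N e j ! p) (\<lambda>i. if i < l then inp i p else 0) j c) R"
    unfolding linear_HSS_concat_def
    using cnf_linear cnf_private[OF e' tk] cnf_correct[OF sol N a] by blast
  show ?thesis
    using e' a H upload_cnf[OF e' a, where 'f='f and l=l] by blast
qed


theorem mainTheorem3:
  fixes l k t b :: nat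
  assumes "0 < l" and "0 < k" and "0 < t"
    and "real b > real l / real k"
  shows "((\<exists>nr a (sh :: nat \<Rightarrow> 'f::{field,finite} \<Rightarrow> (nat \<Rightarrow> 'f) \<Rightarrow> nat \<Rightarrow> 'f) ev R.
              linear_HSS_concat l k t b nr a sh ev R)
          \<longleftrightarrow> (\<exists>C :: (nat \<Rightarrow> nat \<Rightarrow> 'f) set. linear_code k b C \<and>
                  code_rate k b C \<ge> real l / real (k * b) \<and> code_dist_ge k C (t + 1)))
       \<and> ((\<exists>C :: (nat \<Rightarrow> nat \<Rightarrow> 'f) set. linear_code k b C \<and>
                  code_rate k b C \<ge> real l / real (k * b) \<and> code_dist_ge k C (t + 1))
          \<longrightarrow> (\<exists>N e a ev (R :: nat \<Rightarrow> nat \<Rightarrow> nat \<Rightarrow> 'f).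
                 bij_betw e {0..<N} {T. T \<subseteq> {..<k} \<and> card T = t}
               \<and> (\<forall>j<k. a j = length (cnf_idx N e j))
               \<and> linear_HSS_concat l k t b (N - 1) a (cnf_share N e) ev R
               \<and> upload_cost TYPE('f) l k a
                   = real k * real l * real ((k - 1) choose t) * log 2 (real CARD('f))))"
proof -
  have dir1: "(\<exists>nr a (sh :: nat \<Rightarrow> 'f::{field,finite} \<Rightarrow> (nat \<Rightarrow> 'f) \<Rightarrow> nat \<Rightarrow> 'f) ev R.
              linear_HSS_concat l k t b nr a sh ev R)
          \<Longrightarrow> (\<exists>C :: (nat \<Rightarrow> nat \<Rightarrow> 'f) set. linear_code k b C \<and>
                  code_rate k b C \<ge> real l / real (k * b) \<and> code_dist_ge k C (t + 1))"
    using hss_to_code by blast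
  have dir2: "(\<exists>N e a ev (R :: nat \<Rightarrow> nat \<Rightarrow> nat \<Rightarrow> 'f).
                 bij_betw e {0..<N} {T. T \<subseteq> {..<k} \<and> card T = t}
               \<and> (\<forall>j<k. a j = length (cnf_idx N e j))
               \<and> linear_HSS_concat l k t b (N - 1) a (cnf_share N e) ev R
               \<and> upload_cost TYPE('f) l k a
                   = real k * real l * real ((k - 1) choose t) * log 2 (real CARD('f)))"
    if "\<exists>C :: (nat \<Rightarrow> nat \<Rightarrow> 'f) set. linear_code k b C \<and>
                  code_rate k b C \<ge> real l / real (k * b) \<and> code_dist_ge k C (t + 1)"
    using that code_to_hss[OF _ _ _ assms(1,2,4)] by blast
  show ?thesis
  proof (intro conjI iffI impI)
    assume "\<exists>C :: (nat \<Rightarrow> nat \<Rightarrow> 'f) set. linear_code k b C \<and>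
                  code_rate k b C \<ge> real l / real (k * b) \<and> code_dist_ge k C (t + 1)"
    from dir2[OF this] show "\<exists>nr a (sh :: nat \<Rightarrow> 'f::{field,finite} \<Rightarrow> (nat \<Rightarrow> 'f) \<Rightarrow> nat \<Rightarrow> 'f) ev R.
              linear_HSS_concat l k t b nr a sh ev R" by blast
  qed (use dir1 dir2 in auto)
qed

end
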